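(* Let $I$ be a countable index set with nested finite subsets $I_1\subset I_2\subset\cdots$, $\bigcup_nI_n=I$, let $W$ be a compact Hausdorff space, and let $m:X^{\mathbb{R}}\to C^*(W)$ be a minimal sequence measure function. Then for every real-valued continuous function $f\in C^*(W)$ and every $\varepsilon>0$ there exists $\mathbf{x}\in X^{\mathbb{R}}$ with $\|m(\mathbf{x})-f\|_\infty<\varepsilon$.
   Context: Frame compatible sequences: nonnegative real $\mathbf{x}$ with $0\le x_1\le|I_1|$, $0\le x_i-x_{i-1}\le|I_i\setminus I_{i-1}|$ ($i\ge2$); $X$ their set, $X^+=\{c\mathbf{x}:\mathbf{x}\in X,c\ge0\}$, $X^{\mathbb{R}}=\{\mathbf{x}^1-\mathbf{x}^2:\mathbf{x}^j\in X^+\}$. $\mathbf{x}\approx\mathbf{y}$ iff $\lim_n(x_n-y_n)/|I_n|=0$; for nonnegative sequences $\mathbf{y}\leqq\mathbf{x}$ iff $\liminf_n(x_n-y_n)/|I_n|\ge0$. For a compact Hausdorff $V$, $C^*(V)$ denotes real continuous functions on $V$. A sequence measure function is a linear map $m:X^{\mathbb{R}}\to C^*(V)$ with $m(\mathbf{x})=m(\mathbf{y})\iff\mathbf{x}\approx\mathbf{y}$ for $\mathbf{x},\mathbf{y}\in X^{\mathbb{R}}$, $m(\mathbf{x})\le m(\mathbf{y})$ pointwise $\iff\mathbf{x}\leqq\mathbf{y}$ for $\mathbf{x},\mathbf{y}\in X^+$, and $m((|I_1|,|I_2|,\dots))=1$. Such $m:X^{\mathbb{R}}\to C^*(W)$ is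 separable if for all $v\ne w$ in $W$ there is $\mathbf{x}\in X^{\mathbb{R}}$ with $m(\mathbf{x})(v)\ne m(\mathbf{x})(w)$; reducible if there is a compact $V\subsetneq W$ such that $\mathbf{x}\mapsto m(\mathbf{x})|_V$ is a sequence measure function $X^{\mathbb{R}}\to C^*(V)$; irreducible if not reducible; minimal if separable and irreducible. *)

theory Defs
  imports "HOL-Analysis.Analysis"
begin

text \<open>Sequences are indexed from 0: x 0 stands for x_1, I 0 for I_1, etc.\<close>

definition frame_compatible :: "(nat \<Rightarrow> 'a set) \<Rightarrow> (nat \<Rightarrow> real) \<Rightarrow> bool" where
  "frame_compatible I x \<longleftrightarrow>
     (\<forall>n. 0 \<le> x n) \<and>
     0 \<le> x 0 \<and> x 0 \<le> real (card (I 0)) \<and>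
     (\<forall>n. 0 \<le> x (Suc n) - x n \<and> x (Suc n) - x n \<le> real (card (I (Suc n) - I n)))"

definition Xset :: "(nat \<Rightarrow> 'a set) \<Rightarrow> (nat \<Rightarrow> real) set" where
  "Xset I = {x. frame_compatible I x}"

definition Xplus :: "(nat \<Rightarrow> 'a set) \<Rightarrow> (nat \<Rightarrow> real) set" where
  "Xplus I = {(\<lambda>n. c * x n) | c x. c \<ge> 0 \<and> x \<in> Xset I}"

definition XR :: "(nat \<Rightarrow> 'a set) \<Rightarrow> (nat \<Rightarrow> real) set" where
  "XR I = {(\<lambda>n. x1 n - x2 n) | x1 x2. x1 \<in> Xplus I \<and> x2 \<in> Xplus I}"

definition seq_approx :: "(nat \<Rightarrow> 'a set) \<Rightarrow> (nat \<Rightarrow> real) \<Rightarrow> (nat \<Rightarrow> real) \<Rightarrow> bool" where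
  "seq_approx I x y \<longleftrightarrow> (\<lambda>n. (x n - y n) / real (card (I n))) \<longlonglongrightarrow> 0"

definition seq_leqq :: "(nat \<Rightarrow> 'a set) \<Rightarrow> (nat \<Rightarrow> real) \<Rightarrow> (nat \<Rightarrow> real) \<Rightarrow> bool" where
  "seq_leqq I y x \<longleftrightarrow> liminf (\<lambda>n. ereal ((x n - y n) / real (card (I n)))) \<ge> 0"

text \<open>m is a sequence measure function X^R \<rightarrow> C*(V), where functions are compared on V only.\<close>
definition seq_measure_fun_on ::
  "(nat \<Rightarrow> 'a set) \<Rightarrow> 'w::topological_space set \<Rightarrow> ((nat \<Rightarrow> real) \<Rightarrow> 'w \<Rightarrow> real) \<Rightarrow> bool" where
  "seq_measure_fun_on I V m \<longleftrightarrow>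
     (\<forall>x\<in>XR I. continuous_on V (m x)) \<and>
     (\<forall>x\<in>XR I. \<forall>y\<in>XR I. \<forall>w\<in>V. m (\<lambda>n. x n + y n) w = m x w + m y w) \<and>
     (\<forall>c. \<forall>x\<in>XR I. \<forall>w\<in>V. m (\<lambda>n. c * x n) w = c * m x w) \<and>
     (\<forall>x\<in>XR I. \<forall>y\<in>XR I. (\<forall>w\<in>V. m x w = m y w) \<longleftrightarrow> seq_approx I x y) \<and>
     (\<forall>x\<in>Xplus I. \<forall>y\<in>Xplus I. (\<forall>w\<in>V. m x w \<le> m y w) \<longleftrightarrow> seq_leqq I x y) \<and>
     (\<forall>w\<in>V. m (\<lambda>n. real (card (I n))) w = 1)"

definition separable_smf ::
  "(nat \<Rightarrow> 'a set) \<Rightarrow> 'w::topological_space set \<Rightarrow> ((nat \<Rightarrow> real) \<Rightarrow> 'w \<Rightarrow> real) \<Rightarrow> bool" where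
  "separable_smf I W m \<longleftrightarrow>
     (\<forall>v\<in>W. \<forall>w\<in>W. v \<noteq> w \<longrightarrow> (\<exists>x\<in>XR I. m x v \<noteq> m x w))"

definition reducible_smf ::
  "(nat \<Rightarrow> 'a set) \<Rightarrow> 'w::topological_space set \<Rightarrow> ((nat \<Rightarrow> real) \<Rightarrow> 'w \<Rightarrow> real) \<Rightarrow> bool" where
  "reducible_smf I W m \<longleftrightarrow>
     (\<exists>V. compact V \<and> V \<subset> W \<and> seq_measure_fun_on I V m)"

definition minimal_smf ::
  "(nat \<Rightarrow> 'a set) \<Rightarrow> 'w::topological_space set \<Rightarrow> ((nat \<Rightarrow> real) \<Rightarrow> 'w \<Rightarrow> real) \<Rightarrow> bool" where
  "minimal_smf I W m \<longleftrightarrow> separable_smf I W m \<and> \<not> reducible_smf I W m"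

end

theory Submission
  imports Defs
begin


lemma fin_min_in:
  fixes L :: "('w \<Rightarrow> real) set"
  assumes minL: "\<And>g h. g \<in> L \<Longrightarrow> h \<in> L \<Longrightarrow> (\<lambda>w. min (g w) (h w)) \<in> L"
  shows "finite T \<Longrightarrow> T \<noteq> {} \<Longrightarrow> (\<forall>t\<in>T. g t \<in> L) \<Longrightarrow> (\<lambda>w. Min ((\<lambda>t. g t w) ` T)) \<in> L"
proof (induction T rule: finite_ne_induct)
  case (singleton x)
  then show ?case by simp
next
  case (insert x F)
  have "(\<lambda>w. Min ((\<lambda>t. g t w) ` insert x F)) = (\<lambda>w. min (g x w) (Min ((\<lambda>t. g t w) ` F)))"
    using insert by (auto simp: Min_insert)
  then show ?case using insert minL by auto
qed

lemma fin_max_in: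
  fixes L :: "('w \<Rightarrow> real) set"
  assumes maxL: "\<And>g h. g \<in> L \<Longrightarrow> h \<in> L \<Longrightarrow> (\<lambda>w. max (g w) (h w)) \<in> L"
  shows "finite T \<Longrightarrow> T \<noteq> {} \<Longrightarrow> (\<forall>t\<in>T. g t \<in> L) \<Longrightarrow> (\<lambda>w. Max ((\<lambda>t. g t w) ` T)) \<in> L"
proof (induction T rule: finite_ne_induct)
  case (singleton x)
  then show ?case by simp
next
  case (insert x F)
  have "(\<lambda>w. Max ((\<lambda>t. g t w) ` insert x F)) = (\<lambda>w. max (g x w) (Max ((\<lambda>t. g t w) ` F)))"
    using insert by (auto simp: Max_insert)
  then show ?case using insert maxL by auto
qed

lemma lattice_SW:
  fixes L :: "('w::topological_space \<Rightarrow> real) set"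
  assumes cpt: "compact (UNIV :: 'w set)"
    and contL: "\<And>g. g \<in> L \<Longrightarrow> continuous_on UNIV g"
    and addL: "\<And>g h. g \<in> L \<Longrightarrow> h \<in> L \<Longrightarrow> (\<lambda>w. g w + h w) \<in> L"
    and scaleL: "\<And>g c. g \<in> L \<Longrightarrow> (\<lambda>w. c * g w) \<in> L"
    and constL: "\<And>c. (\<lambda>w. c) \<in> L"
    and maxL: "\<And>g h. g \<in> L \<Longrightarrow> h \<in> L \<Longrightarrow> (\<lambda>w. max (g w) (h w)) \<in> L"
    and minL: "\<And>g h. g \<in> L \<Longrightarrow> h \<in> L \<Longrightarrow> (\<lambda>w. min (g w) (h w)) \<in> L"
    and sepL: "\<And>s t. s \<noteq> t \<Longrightarrow> \<exists>g\<in>L. g s \<noteq> g t"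
    and f: "continuous_on UNIV f" and e: "e > 0"
  shows "\<exists>g\<in>L. \<forall>w. \<bar>g w - f w\<bar> < e"
proof -
  have interp: "\<exists>g\<in>L. g s = f s \<and> g t = f t" for s t
  proof (cases "s = t")
    case True
    then show ?thesis using constL[of "f s"] by auto
  next
    case False
    then obtain g where g: "g \<in> L" "g s \<noteq> g t" using sepL by blast
    define h where "h = (\<lambda>w. f s + ((f t - f s) / (g t - g s)) * (g w + (- g s)))"
    have "(\<lambda>w. g w + (- g s)) \<in> L" using addL[OF g(1) constL] .
    then have "(\<lambda>w. ((f t - f s) / (g t - g s)) * (g w + (- g s))) \<in> L" using scaleL by blast
    then have "h \<in> L" unfolding h_def using addL[OF constL] by blast
    moreover have "h s = f s" "h t = f t" using g(2) by (auto simp: h_def field_simps)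
    ultimately show ?thesis by blast
  qed
  then obtain G where G: "\<And>s t. G s t \<in> L" "\<And>s t. G s t s = f s" "\<And>s t. G s t t = f t"
    by metis
  have step1: "\<exists>h\<in>L. h s > f s - e \<and> (\<forall>w. h w < f w + e)" for s
  proof -
    have opn: "open {w. G s t w < f w + e}" for t
      by (rule open_Collect_less[OF contL[OF G(1)] continuous_on_add[OF f continuous_on_const]])
    have cov: "UNIV \<subseteq> (\<Union>t\<in>UNIV. {w. G s t w < f w + e})"
      using G(3) e by auto
    obtain T where T: "finite T" "UNIV \<subseteq> (\<Union>t\<in>T. {w. G s t w < f w + e})"
    proof (rule compactE_image[OF cpt, of UNIV "\<lambda>t. {w. G s t w < f w + e}"])
      show "\<And>t. t \<in> UNIV \<Longrightarrow> open {w. G s t w < f w + e}" by (rule opn)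
      show "UNIV \<subseteq> (\<Union>t\<in>UNIV. {w. G s t w < f w + e})" by (rule cov)
    qed (rule that, assumption+)
    have Tne: "T \<noteq> {}" using T(2) by auto
    define h where "h = (\<lambda>w. Min ((\<lambda>t. G s t w) ` T))"
    have "h \<in> L" unfolding h_def using fin_min_in[OF minL T(1) Tne] G(1) by blast
    moreover have "h s = f s"
    proof -
      have "h s \<in> (\<lambda>t. G s t s) ` T" unfolding h_def using T(1) Tne by (intro Min_in) auto
      then show ?thesis using G(2) by auto
    qed
    moreover have "h w < f w + e" for w
    proof -
      obtain t where t: "t \<in> T" "G s t w < f w + e" using T(2) by blast
      have "h w \<le> G s t w" unfolding h_def using T(1) t(1) by (intro Min_le) auto
      then show ?thesis using t by simp
    qed
    ultimately have "h \<in> L \<and> f s - e < h s \<and> (\<forall>w. h w < f w + e)" using e by simp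
    then show ?thesis by blast
  qed
  then obtain H where H: "\<And>s. H s \<in> L" "\<And>s. H s s > f s - e" "\<And>s w. H s w < f w + e"
    by metis
  have opn: "open {w. f w - e < H s w}" for s
    by (rule open_Collect_less[OF continuous_on_diff[OF f continuous_on_const] contL[OF H(1)]])
  have cov: "UNIV \<subseteq> (\<Union>s\<in>UNIV. {w. f w - e < H s w})"
    using H(2) by auto
  obtain S where S: "finite S" "UNIV \<subseteq> (\<Union>s\<in>S. {w. f w - e < H s w})"
  proof (rule compactE_image[OF cpt, of UNIV "\<lambda>s. {w. f w - e < H s w}"])
    show "\<And>t. t \<in> UNIV \<Longrightarrow> open {w. f w - e < H t w}" by (rule opn)
    show "UNIV \<subseteq> (\<Union>s\<in>UNIV. {w. f w - e < H s w})" by (rule cov)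
  qed (rule that, assumption+)
  have Sne: "S \<noteq> {}" using S(2) by auto
  define h where "h = (\<lambda>w. Max ((\<lambda>s. H s w) ` S))"
  have "h \<in> L" unfolding h_def using fin_max_in[OF maxL S(1) Sne] H(1) by blast
  moreover have "\<bar>h w - f w\<bar> < e" for w
  proof -
    obtain s where s: "s \<in> S" "f w - e < H s w" using S(2) by blast
    have "H s w \<le> h w" unfolding h_def using S(1) s(1) by (intro Max_ge) auto
    moreover have "h w \<in> (\<lambda>s. H s w) ` S" unfolding h_def using S(1) Sne by (intro Max_in) auto
    then have "h w < f w + e" using H(3) by auto
    ultimately show ?thesis using s by auto
  qed
  ultimately show ?thesis by blast
qed


definition FC :: "(nat \<Rightarrow> 'a set) \<Rightarrow> real \<Rightarrow> (nat \<Rightarrow> real) \<Rightarrow> bool" where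
  "FC I c x \<longleftrightarrow> (\<forall>n. 0 \<le> x n) \<and> x 0 \<le> c * real (card (I 0)) \<and>
     (\<forall>n. x n \<le> x (Suc n) \<and> x (Suc n) - x n \<le> c * real (card (I (Suc n) - I n)))"

lemma FC_mono: "FC I c x \<Longrightarrow> c \<le> d \<Longrightarrow> FC I d x"
  unfolding FC_def by (meson mult_right_mono of_nat_0_le_iff order_trans)

lemma FC_add: "FC I c x \<Longrightarrow> FC I d y \<Longrightarrow> FC I (c + d) (\<lambda>n. x n + y n)"
  unfolding FC_def by (auto simp: distrib_right) (smt (verit))+

lemma FC_scale: "0 \<le> k \<Longrightarrow> FC I c x \<Longrightarrow> FC I (k * c) (\<lambda>n. k * x n)"
  unfolding FC_def
  by (auto simp: mult.assoc mult_left_mono simp flip: right_diff_distrib)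

lemma FC_max: "FC I c x \<Longrightarrow> FC I c y \<Longrightarrow> FC I c (\<lambda>n. max (x n) (y n))"
  unfolding FC_def by (auto simp: max_def) (smt (verit))+

lemma FC_Xset: "FC I 1 x \<longleftrightarrow> x \<in> Xset I"
  unfolding FC_def Xset_def frame_compatible_def by auto

lemma FC_div: "FC I c x \<Longrightarrow> 0 < c \<Longrightarrow> FC I 1 (\<lambda>n. x n / c)"
proof -
  assume a: "FC I c x" "0 < c"
  then have b: "FC I (inverse c * c) (\<lambda>n. inverse c * x n)" by (intro FC_scale) auto
  have i: "inverse c * c = 1" using a by simp
  have e: "(\<lambda>n. inverse c * x n) = (\<lambda>n. x n / c)" by (simp add: divide_inverse mult.commute)
  show ?thesis using b by (simp only: i e)
qed

lemma Xplus_FC: "x \<in> Xplus I \<longleftrightarrow> (\<exists>c\<ge>0. FC I c x)"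
proof
  assume "x \<in> Xplus I"
  then obtain c y where cy: "c \<ge> 0" "y \<in> Xset I" "x = (\<lambda>n. c * y n)" unfolding Xplus_def by blast
  have "FC I 1 y" using cy(2) FC_Xset by blast
  then have "FC I (c * 1) (\<lambda>n. c * y n)" using cy(1) by (rule FC_scale[rotated])
  then show "\<exists>c\<ge>0. FC I c x" using cy(1) unfolding cy(3) by auto
next
  assume "\<exists>c\<ge>0. FC I c x"
  then obtain c where c: "c \<ge> 0" "FC I c x" by auto
  have d: "FC I (c + 1) x" using FC_mono[OF c(2), of "c + 1"] by simp
  have "FC I 1 (\<lambda>n. x n / (c + 1))" using FC_div[OF d] c by auto
  then have xs: "(\<lambda>n. x n / (c + 1)) \<in> Xset I" using FC_Xset by blast
  have eq: "\<And>n. (c + 1) * (x n / (c + 1)) = x n" using c by simp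
  have "c + 1 \<ge> 0" using c by simp
  show "x \<in> Xplus I" unfolding Xplus_def
  proof (intro CollectI exI[of _ "c + 1"] exI[of _ "\<lambda>n. x n / (c + 1)"] conjI)
    show "x = (\<lambda>n. (c + 1) * (x n / (c + 1)))" by (simp only: eq)
  qed fact+
qed

lemma Xplus_add: "x \<in> Xplus I \<Longrightarrow> y \<in> Xplus I \<Longrightarrow> (\<lambda>n. x n + y n) \<in> Xplus I"
  unfolding Xplus_FC using FC_add by (metis add_nonneg_nonneg)

lemma Xplus_scale: "x \<in> Xplus I \<Longrightarrow> 0 \<le> k \<Longrightarrow> (\<lambda>n. k * x n) \<in> Xplus I"
  unfolding Xplus_FC using FC_scale by (metis mult_nonneg_nonneg)

lemma Xplus_max: "x \<in> Xplus I \<Longrightarrow> y \<in> Xplus I \<Longrightarrow> (\<lambda>n. max (x n) (y n)) \<in> Xplus I"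
proof -
  assume "x \<in> Xplus I" "y \<in> Xplus I"
  then obtain c d where "c \<ge> 0" "d \<ge> 0" "FC I c x" "FC I d y" unfolding Xplus_FC by auto
  then have "FC I (c + d) x" "FC I (c + d) y" using FC_mono[of I c x "c + d"] FC_mono[of I d y "c + d"] by auto
  then have "FC I (c + d) (\<lambda>n. max (x n) (y n))" by (rule FC_max)
  then show ?thesis unfolding Xplus_FC using \<open>c \<ge> 0\<close> \<open>d \<ge> 0\<close> by (metis add_nonneg_nonneg)
qed

lemma Xplus_zero: "(\<lambda>n. 0) \<in> Xplus I"
  unfolding Xplus_FC FC_def by auto

lemma Xplus_card:
  assumes "\<And>n. finite (I n)" "\<And>n. I n \<subseteq> I (Suc n)"
  shows "(\<lambda>n. real (card (I n))) \<in> Xplus I"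
proof -
  have "card (I (Suc n) - I n) = card (I (Suc n)) - card (I n)" for n
    using assms by (simp add: card_Diff_subset)
  moreover have "card (I n) \<le> card (I (Suc n))" for n using assms by (simp add: card_mono)
  ultimately have "FC I 1 (\<lambda>n. real (card (I n)))" unfolding FC_def by (auto simp: of_nat_diff)
  then show ?thesis unfolding Xplus_FC by (auto intro!: exI[of _ 1])
qed

lemma XR_I: "a \<in> Xplus I \<Longrightarrow> b \<in> Xplus I \<Longrightarrow> x = (\<lambda>n. a n - b n) \<Longrightarrow> x \<in> XR I"
  unfolding XR_def by blast

lemma XR_E: "x \<in> XR I \<Longrightarrow> (\<And>a b. a \<in> Xplus I \<Longrightarrow> b \<in> Xplus I \<Longrightarrow> x = (\<lambda>n. a n - b n) \<Longrightarrow> P) \<Longrightarrow> P"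
  unfolding XR_def by blast

lemma Xplus_XR: "a \<in> Xplus I \<Longrightarrow> a \<in> XR I"
  by (rule XR_I[OF _ Xplus_zero]) simp_all

lemma XR_add: "x \<in> XR I \<Longrightarrow> y \<in> XR I \<Longrightarrow> (\<lambda>n. x n + y n) \<in> XR I"
proof -
  assume xy: "x \<in> XR I" "y \<in> XR I"
  obtain a b where ab: "a \<in> Xplus I" "b \<in> Xplus I" "x = (\<lambda>n. a n - b n)" using xy(1) by (rule XR_E)
  obtain c d where cd: "c \<in> Xplus I" "d \<in> Xplus I" "y = (\<lambda>n. c n - d n)" using xy(2) by (rule XR_E)
  note abcd = ab(1,2) cd(1,2) ab(3) cd(3)
  have h1: "(\<lambda>n. a n + c n) \<in> Xplus I" by (rule Xplus_add) (fact abcd)+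
  have h2: "(\<lambda>n. b n + d n) \<in> Xplus I" by (rule Xplus_add) (fact abcd)+
  have "(\<lambda>n. x n + y n) = (\<lambda>n. (a n + c n) - (b n + d n))" unfolding abcd(5,6) by (simp add: algebra_simps)
  then show ?thesis by (rule XR_I[OF h1 h2])
qed

lemma XR_scale: "x \<in> XR I \<Longrightarrow> (\<lambda>n. k * x n) \<in> XR I"
proof -
  assume "x \<in> XR I"
  then obtain a b where ab: "a \<in> Xplus I" "b \<in> Xplus I" "x = (\<lambda>n. a n - b n)" by (rule XR_E)
  show ?thesis
  proof (cases "k \<ge> 0")
    case True
    have h1: "(\<lambda>n. k * a n) \<in> Xplus I" by (rule Xplus_scale[OF ab(1) True])
    have h2: "(\<lambda>n. k * b n) \<in> Xplus I" by (rule Xplus_scale[OF ab(2) True])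
    have "(\<lambda>n. k * x n) = (\<lambda>n. k * a n - k * b n)" unfolding ab(3) by (simp add: algebra_simps)
    then show ?thesis by (rule XR_I[OF h1 h2])
  next
    case False
    then have k: "-k \<ge> 0" by simp
    have h1: "(\<lambda>n. (-k) * b n) \<in> Xplus I" by (rule Xplus_scale[OF ab(2) k])
    have h2: "(\<lambda>n. (-k) * a n) \<in> Xplus I" by (rule Xplus_scale[OF ab(1) k])
    have "(\<lambda>n. k * x n) = (\<lambda>n. (-k) * b n - (-k) * a n)" unfolding ab(3) by (simp add: algebra_simps)
    then show ?thesis by (rule XR_I[OF h1 h2])
  qed
qed

lemma XR_diff: "x \<in> XR I \<Longrightarrow> y \<in> XR I \<Longrightarrow> (\<lambda>n. x n - y n) \<in> XR I"
  using XR_add[of x I "\<lambda>n. (-1) * y n"] XR_scale[of y I "-1"] by simp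

lemma XR_max: "x \<in> XR I \<Longrightarrow> y \<in> XR I \<Longrightarrow> (\<lambda>n. max (x n) (y n)) \<in> XR I"
proof -
  assume xy: "x \<in> XR I" "y \<in> XR I"
  obtain a b where ab: "a \<in> Xplus I" "b \<in> Xplus I" "x = (\<lambda>n. a n - b n)" using xy(1) by (rule XR_E)
  obtain c d where cd: "c \<in> Xplus I" "d \<in> Xplus I" "y = (\<lambda>n. c n - d n)" using xy(2) by (rule XR_E)
  note abcd = ab(1,2) cd(1,2) ab(3) cd(3)
  have "(\<lambda>n. max (a n + d n) (c n + b n)) \<in> Xplus I" using abcd by (intro Xplus_max Xplus_add)
  moreover have "(\<lambda>n. b n + d n) \<in> Xplus I" using abcd by (intro Xplus_add)
  moreover have "(\<lambda>n. max (x n) (y n)) = (\<lambda>n. max (a n + d n) (c n + b n) - (b n + d n))"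
    using abcd by (auto simp: max_def)
  ultimately show ?thesis by (rule XR_I)
qed

lemma XR_min: "x \<in> XR I \<Longrightarrow> y \<in> XR I \<Longrightarrow> (\<lambda>n. min (x n) (y n)) \<in> XR I"
proof -
  assume "x \<in> XR I" "y \<in> XR I"
  then have "(\<lambda>n. max ((-1) * x n) ((-1) * y n)) \<in> XR I" by (intro XR_max XR_scale)
  then have "(\<lambda>n. (-1) * max ((-1) * x n) ((-1) * y n)) \<in> XR I" by (rule XR_scale)
  moreover have "(\<lambda>n. (-1) * max ((-1) * x n) ((-1) * y n)) = (\<lambda>n. min (x n) (y n))"
    by (auto simp: max_def min_def)
  ultimately show ?thesis by simp
qed



lemma m_add: "seq_measure_fun_on I UNIV m \<Longrightarrow> x \<in> XR I \<Longrightarrow> y \<in> XR I \<Longrightarrow>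
    m (\<lambda>n. x n + y n) w = m x w + m y w"
  unfolding seq_measure_fun_on_def by blast

lemma m_scale: "seq_measure_fun_on I UNIV m \<Longrightarrow> x \<in> XR I \<Longrightarrow> m (\<lambda>n. k * x n) w = k * m x w"
  unfolding seq_measure_fun_on_def by blast

lemma m_card: "seq_measure_fun_on I UNIV m \<Longrightarrow> m (\<lambda>n. real (card (I n))) w = 1"
  unfolding seq_measure_fun_on_def by blast

lemma m_cont: "seq_measure_fun_on I UNIV m \<Longrightarrow> x \<in> XR I \<Longrightarrow> continuous_on UNIV (m x)"
  unfolding seq_measure_fun_on_def by blast

lemma m_order: "seq_measure_fun_on I UNIV m \<Longrightarrow> x \<in> Xplus I \<Longrightarrow> y \<in> Xplus I \<Longrightarrow>
    (\<forall>w. m x w \<le> m y w) \<longleftrightarrow> seq_leqq I x y"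
  unfolding seq_measure_fun_on_def by blast

lemma m_diff: "seq_measure_fun_on I UNIV m \<Longrightarrow> x \<in> XR I \<Longrightarrow> y \<in> XR I \<Longrightarrow>
    m (\<lambda>n. x n - y n) w = m x w - m y w"
proof -
  assume S: "seq_measure_fun_on I UNIV m" and xy: "x \<in> XR I" "y \<in> XR I"
  have y': "(\<lambda>n. (-1) * y n) \<in> XR I" using xy(2) by (rule XR_scale)
  have "(\<lambda>n. x n - y n) = (\<lambda>n. x n + (\<lambda>n. (-1) * y n) n)" by simp
  then have "m (\<lambda>n. x n - y n) w = m x w + m (\<lambda>n. (-1) * y n) w"
    using m_add[OF S xy(1) y'] by simp
  also have "\<dots> = m x w - m y w" using m_scale[OF S xy(2), of "-1" w] by simp
  finally show ?thesis .
qed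

lemma m_const: "seq_measure_fun_on I UNIV m \<Longrightarrow> (\<lambda>n. real (card (I n))) \<in> XR I \<Longrightarrow>
    m (\<lambda>n. k * real (card (I n))) w = k"
  using m_scale[of I m "\<lambda>n. real (card (I n))" k w] m_card[of I m w] by simp

lemma m_mono:
  assumes S: "seq_measure_fun_on I UNIV m" and xy: "x \<in> XR I" "y \<in> XR I"
    and le: "\<And>n. x n \<le> y n"
  shows "m x w \<le> m y w"
proof -
  have d: "(\<lambda>n. y n - x n) \<in> XR I" using xy by (rule XR_diff[rotated])
  then obtain a b where ab: "a \<in> Xplus I" "b \<in> Xplus I" "(\<lambda>n. y n - x n) = (\<lambda>n. a n - b n)"
    by (rule XR_E)
  have abn: "a n - b n = y n - x n" for n using fun_cong[OF ab(3), of n] by simp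
  have "seq_leqq I b a" unfolding seq_leqq_def
  proof (rule Liminf_bounded, rule always_eventually, rule allI)
    fix n
    have "0 \<le> (a n - b n) / real (card (I n))" using abn[of n] le[of n] by simp
    then show "0 \<le> ereal ((a n - b n) / real (card (I n)))" by simp
  qed
  then have "\<forall>w. m b w \<le> m a w" using m_order[OF S ab(2) ab(1)] by blast
  moreover have "m (\<lambda>n. y n - x n) w = m a w - m b w"
    unfolding ab(3) by (rule m_diff[OF S Xplus_XR[OF ab(1)] Xplus_XR[OF ab(2)]])
  moreover have "m (\<lambda>n. y n - x n) w = m y w - m x w" by (rule m_diff[OF S xy(2) xy(1)])
  ultimately show ?thesis by (metis diff_ge_0_iff_ge)
qed

lemma m_nonpos:
  assumes S: "seq_measure_fun_on I UNIV m" and u: "u \<in> XR I"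
    and np: "\<And>w. m u w \<le> 0" and t: "t > 0"
  shows "eventually (\<lambda>n. u n / real (card (I n)) < t) sequentially"
proof -
  obtain a b where ab: "a \<in> Xplus I" "b \<in> Xplus I" "u = (\<lambda>n. a n - b n)"
    using u by (rule XR_E)
  have "m u w = m a w - m b w" for w
    unfolding ab(3) by (rule m_diff[OF S Xplus_XR[OF ab(1)] Xplus_XR[OF ab(2)]])
  then have "\<forall>w. m a w \<le> m b w" using np by (metis diff_le_0_iff_le)
  then have "seq_leqq I a b" using m_order[OF S ab(1) ab(2)] by blast
  then have "0 \<le> liminf (\<lambda>n. ereal ((b n - a n) / real (card (I n))))" unfolding seq_leqq_def .
  then have H: "\<forall>y<0. eventually (\<lambda>n. y < ereal ((b n - a n) / real (card (I n)))) sequentially"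
    unfolding le_Liminf_iff .
  have "ereal (- t) < 0" using t by simp
  then have "eventually (\<lambda>n. ereal (- t) < ereal ((b n - a n) / real (card (I n)))) sequentially"
    using H by blast
  then show ?thesis
  proof (rule eventually_mono)
    fix n assume "ereal (- t) < ereal ((b n - a n) / real (card (I n)))"
    then have "- t < (b n - a n) / real (card (I n))" by simp
    moreover have "(a n - b n) / real (card (I n)) = - ((b n - a n) / real (card (I n)))"
      by (simp add: diff_divide_distrib)
    ultimately show "u n / real (card (I n)) < t" unfolding ab(3) by simp
  qed
qed

lemma red:
  assumes S: "seq_measure_fun_on I UNIV m"
    and P: "\<And>u t. u \<in> XR I \<Longrightarrow> t > 0 \<Longrightarrow> (\<forall>w\<in>V. m u w \<le> 0) \<Longrightarrow>
              eventually (\<lambda>n. u n / real (card (I n)) < t) sequentially"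
  shows "seq_measure_fun_on I V m"
proof -
  have c1: "\<forall>x\<in>XR I. continuous_on V (m x)"
    using m_cont[OF S] continuous_on_subset by blast
  have c2: "\<forall>x\<in>XR I. \<forall>y\<in>XR I. \<forall>w\<in>V. m (\<lambda>n. x n + y n) w = m x w + m y w"
    using m_add[OF S] by blast
  have c3: "\<forall>c. \<forall>x\<in>XR I. \<forall>w\<in>V. m (\<lambda>n. c * x n) w = c * m x w"
    using m_scale[OF S] by blast
  have c6: "\<forall>w\<in>V. m (\<lambda>n. real (card (I n))) w = 1" using m_card[OF S] by blast
  have c4: "(\<forall>w\<in>V. m x w = m y w) \<longleftrightarrow> seq_approx I x y" if xy: "x \<in> XR I" "y \<in> XR I" for x y
  proof
    assume "seq_approx I x y"
    then have "\<forall>w\<in>UNIV. m x w = m y w" using S xy unfolding seq_measure_fun_on_def by blast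
    then show "\<forall>w\<in>V. m x w = m y w" by blast
  next
    assume eq: "\<forall>w\<in>V. m x w = m y w"
    define d where "d = (\<lambda>n. x n - y n)"
    have d: "d \<in> XR I" unfolding d_def using xy by (rule XR_diff)
    have nd: "(\<lambda>n. (-1) * d n) \<in> XR I" using d by (rule XR_scale)
    have md0: "\<forall>w\<in>V. m d w = 0" unfolding d_def using eq m_diff[OF S xy] by simp
    then have md: "\<forall>w\<in>V. m d w \<le> 0" by simp
    have mnd: "\<forall>w\<in>V. m (\<lambda>n. (-1) * d n) w \<le> 0" using md0 m_scale[OF S d, of "-1"] by simp
    show "seq_approx I x y" unfolding seq_approx_def tendsto_iff
    proof (intro allI impI)
      fix e :: real assume e: "e > 0"
      have "eventually (\<lambda>n. d n / real (card (I n)) < e) sequentially" by (rule P[OF d e md])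
      moreover have "eventually (\<lambda>n. (-1) * d n / real (card (I n)) < e) sequentially"
        by (rule P[OF nd e mnd])
      ultimately show "eventually (\<lambda>n. dist ((x n - y n) / real (card (I n))) 0 < e) sequentially"
      proof eventually_elim
        case (elim n)
        have "(-1) * d n / real (card (I n)) = - (d n / real (card (I n)))" by simp
        then show ?case using elim unfolding dist_real_def d_def by (simp add: abs_less_iff)
      qed
    qed
  qed
  have c5: "(\<forall>w\<in>V. m x w \<le> m y w) \<longleftrightarrow> seq_leqq I x y" if xy: "x \<in> Xplus I" "y \<in> Xplus I" for x y
  proof
    assume "seq_leqq I x y"
    then have "\<forall>w. m x w \<le> m y w" using m_order[OF S xy] by blast
    then show "\<forall>w\<in>V. m x w \<le> m y w" by blast
  next
    assume le: "\<forall>w\<in>V. m x w \<le> m y w"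
    define d where "d = (\<lambda>n. x n - y n)"
    have d: "d \<in> XR I" unfolding d_def using Xplus_XR[OF xy(1)] Xplus_XR[OF xy(2)] by (rule XR_diff)
    have md: "\<forall>w\<in>V. m d w \<le> 0" unfolding d_def
      using le m_diff[OF S Xplus_XR[OF xy(1)] Xplus_XR[OF xy(2)]] by simp
    show "seq_leqq I x y" unfolding seq_leqq_def le_Liminf_iff
    proof (intro allI impI)
      fix e :: ereal assume e: "e < 0"
      show "eventually (\<lambda>n. e < ereal ((y n - x n) / real (card (I n)))) sequentially"
      proof (cases e)
        case (real r)
        then have r: "-r > 0" using e by simp
        show ?thesis using P[OF d r md]
        proof (rule eventually_mono)
          fix n assume "d n / real (card (I n)) < - r"
          moreover have "(y n - x n) / real (card (I n)) = - (d n / real (card (I n)))"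
            unfolding d_def by (simp add: diff_divide_distrib)
          ultimately show "e < ereal ((y n - x n) / real (card (I n)))" using real by simp
        qed
      next
        case PInf
        then show ?thesis using e by simp
      next
        case MInf
        then show ?thesis by simp
      qed
    qed
  qed
  show ?thesis unfolding seq_measure_fun_on_def using c1 c2 c3 c4 c5 c6 by blast
qed



lemma half_step: "(M::real) < a \<Longrightarrow> M + (a - M) / 2 < a"
  by (simp add: field_simps)

lemma lattice_max:
  fixes m :: "(nat \<Rightarrow> real) \<Rightarrow> 'w::topological_space \<Rightarrow> real"
  assumes S: "seq_measure_fun_on I UNIV m"
    and Cd: "(\<lambda>n. real (card (I n))) \<in> XR I"
    and cpt: "compact (UNIV :: 'w set)"
    and nored: "\<not> reducible_smf I (UNIV :: 'w set) m"
    and xy: "x \<in> XR I" "y \<in> XR I"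
  shows "m (\<lambda>n. max (x n) (y n)) w0 = max (m x w0) (m y w0)"
proof -
  define z where "z = (\<lambda>n. max (x n) (y n))"
  define c where "c = (\<lambda>n. real (card (I n)))"
  have z: "z \<in> XR I" unfolding z_def using xy by (rule XR_max)
  have ge: "m x w \<le> m z w" "m y w \<le> m z w" for w
    by (rule m_mono[OF S xy(1) z], simp add: z_def) (rule m_mono[OF S xy(2) z], simp add: z_def)
  show ?thesis
  proof (rule ccontr)
    assume "m (\<lambda>n. max (x n) (y n)) w0 \<noteq> max (m x w0) (m y w0)"
    then have gt: "m z w0 > max (m x w0) (m y w0)" using ge[of w0] unfolding z_def by linarith
    define \<delta> where "\<delta> = (m z w0 - max (m x w0) (m y w0)) / 2"
    have \<delta>: "\<delta> > 0" unfolding \<delta>_def using gt by simp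
    define V where "V = {w. m z w \<le> max (m x w) (m y w) + \<delta>}"
    have clV: "closed V" unfolding V_def
      by (rule closed_Collect_le[OF m_cont[OF S z]
            continuous_on_add[OF continuous_on_max[OF m_cont[OF S xy(1)] m_cont[OF S xy(2)]] continuous_on_const]])
    have cV: "compact V" using compact_Int_closed[OF cpt clV] by simp
    have "m z w0 > max (m x w0) (m y w0) + \<delta>" unfolding \<delta>_def
      using half_step[OF gt] .
    then have w0: "w0 \<notin> V" unfolding V_def by simp
    then have sV: "V \<subset> UNIV" by blast
    have P: "eventually (\<lambda>n. u n / c n < t) sequentially"
      if u: "u \<in> XR I" and t: "t > 0" and np: "\<forall>w\<in>V. m u w \<le> 0" for u t
    proof (rule ccontr)
      assume "\<not> eventually (\<lambda>n. u n / c n < t) sequentially"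
      then have fr: "frequently (\<lambda>n. \<not> u n / c n < t) sequentially"
        by (simp add: not_eventually)
      define A where "A = (\<lambda>n. u n - (t / 2) * c n)"
      define cc where "cc = min (t / 2) \<delta>"
      have cc: "cc > 0" unfolding cc_def using t \<delta> by simp
      have A: "A \<in> XR I" unfolding A_def c_def using u XR_scale[OF Cd] by (rule XR_diff)
      have key: False
        if r: "r \<in> XR I" and rle: "\<forall>w. m r w \<le> max (m x w) (m y w)"
          and frr: "frequently (\<lambda>n. cc \<le> min (A n) (\<delta> * c n - (z n - r n)) / c n) sequentially" for r
      proof -
        define B where "B = (\<lambda>n. \<delta> * c n - (z n - r n))"
        have B: "B \<in> XR I" unfolding B_def c_def
          by (rule XR_diff[OF XR_scale[OF Cd]]) (rule XR_diff[OF z r])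
        define u1 where "u1 = (\<lambda>n. min (A n) (B n))"
        have u1: "u1 \<in> XR I" unfolding u1_def using A B by (rule XR_min)
        have "\<exists>w. m u1 w > 0"
        proof (rule ccontr)
          assume "\<not> (\<exists>w. m u1 w > 0)"
          then have "\<And>w. m u1 w \<le> 0" by (simp add: not_less)
          then have ev: "eventually (\<lambda>n. u1 n / c n < cc) sequentially"
            unfolding c_def by (rule m_nonpos[OF S u1 _ cc])
          have "frequently (\<lambda>n. cc \<le> u1 n / c n) sequentially" using frr unfolding u1_def B_def .
          moreover have "eventually (\<lambda>n. \<not> cc \<le> u1 n / c n) sequentially"
            using ev by (rule eventually_mono) (simp add: not_le)
          ultimately show False unfolding frequently_def by simp
        qed
        then obtain w where w: "m u1 w > 0" by blast
        have "m u1 w \<le> m A w" by (rule m_mono[OF S u1 A]) (simp add: u1_def)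
        moreover have "m A w = m u w - t / 2"
        proof -
          have "m A w = m u w - m (\<lambda>n. (t / 2) * real (card (I n))) w"
            unfolding A_def c_def by (rule m_diff[OF S u XR_scale[OF Cd]])
          then show ?thesis by (simp only: m_const[OF S Cd])
        qed
        ultimately have mu: "m u w > 0" using w t by simp
        have "m u1 w \<le> m B w" by (rule m_mono[OF S u1 B]) (simp add: u1_def)
        moreover have "m B w = \<delta> - (m z w - m r w)"
        proof -
          have "m B w = m (\<lambda>n. \<delta> * real (card (I n))) w - m (\<lambda>n. z n - r n) w"
            unfolding B_def c_def by (rule m_diff[OF S XR_scale[OF Cd] XR_diff[OF z r]])
          then show ?thesis by (simp only: m_const[OF S Cd] m_diff[OF S z r])
        qed
        ultimately have "m z w < m r w + \<delta>" using w by simp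
        then have "w \<in> V" unfolding V_def using rle[rule_format, of w] by simp
        then show False using np mu by auto
      qed
      have "frequently (\<lambda>n. cc \<le> min (A n) (\<delta> * c n - (z n - x n)) / c n
              \<or> cc \<le> min (A n) (\<delta> * c n - (z n - y n)) / c n) sequentially"
        using fr
      proof (rule frequently_elim1)
        fix n assume n: "\<not> u n / c n < t"
        have c0: "c n \<ge> 0" unfolding c_def by simp
        have cpos: "c n > 0"
        proof (rule ccontr)
          assume "\<not> c n > 0" then have "c n = 0" using c0 by simp
          then show False using n t by simp
        qed
        have ut: "t * c n \<le> u n" using n cpos by (simp add: not_less le_divide_eq)
        have An: "cc * c n \<le> A n" unfolding A_def cc_def
        proof -
          have "min (t / 2) \<delta> * c n \<le> (t / 2) * c n" using cpos by (simp add: mult_right_mono)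
          then show "min (t / 2) \<delta> * c n \<le> u n - t / 2 * c n" using ut by simp
        qed
        have dn: "cc * c n \<le> \<delta> * c n" unfolding cc_def using cpos by (simp add: mult_right_mono)
        have "z n - x n = 0 \<or> z n - y n = 0" unfolding z_def by (simp add: max_def)
        then have "cc * c n \<le> min (A n) (\<delta> * c n - (z n - x n)) \<or> cc * c n \<le> min (A n) (\<delta> * c n - (z n - y n))"
          using An dn by auto
        then show "cc \<le> min (A n) (\<delta> * c n - (z n - x n)) / c n \<or> cc \<le> min (A n) (\<delta> * c n - (z n - y n)) / c n"
          using cpos by (simp add: le_divide_eq)
      qed
      then have "frequently (\<lambda>n. cc \<le> min (A n) (\<delta> * c n - (z n - x n)) / c n) sequentially
               \<or> frequently (\<lambda>n. cc \<le> min (A n) (\<delta> * c n - (z n - y n)) / c n) sequentially"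
        by (simp add: frequently_disj_iff)
      then show False
      proof
        assume "frequently (\<lambda>n. cc \<le> min (A n) (\<delta> * c n - (z n - x n)) / c n) sequentially"
        moreover have "\<forall>w. m x w \<le> max (m x w) (m y w)" by simp
        ultimately show False by (rule key[OF xy(1), rotated])
      next
        assume "frequently (\<lambda>n. cc \<le> min (A n) (\<delta> * c n - (z n - y n)) / c n) sequentially"
        moreover have "\<forall>w. m y w \<le> max (m x w) (m y w)" by simp
        ultimately show False by (rule key[OF xy(2), rotated])
      qed
    qed
    have "seq_measure_fun_on I V m"
      by (rule red[OF S]) (use P in \<open>auto simp: c_def\<close>)
    then show False using nored cV sV unfolding reducible_smf_def by blast
  qed
qed

theorem theorem6p13:
  fixes I :: "nat \<Rightarrow> 'a set"
    and m :: "(nat \<Rightarrow> real) \<Rightarrow> 'w::t2_space \<Rightarrow> real"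
  assumes "countable (\<Union>n. I n)"
    and "\<And>n. finite (I n)"
    and "\<And>n. I n \<subseteq> I (Suc n)"
    and "compact (UNIV :: 'w set)"
    and "seq_measure_fun_on I UNIV m"
    and "minimal_smf I UNIV m"
  shows "\<forall>f. continuous_on UNIV f \<longrightarrow>
           (\<forall>\<epsilon>>0. \<exists>x\<in>XR I. (SUP w. \<bar>m x w - f w\<bar>) < \<epsilon>)"
proof (intro allI impI)
  fix f :: "'w \<Rightarrow> real" and e :: real
  assume f: "continuous_on UNIV f" and e: "e > 0"
  note S = assms(5)
  have cpt: "compact (UNIV :: 'w set)" by fact
  have Cd: "(\<lambda>n. real (card (I n))) \<in> XR I"
    by (rule Xplus_XR[OF Xplus_card]) (use assms(2,3) in auto)
  have nored: "\<not> reducible_smf I (UNIV :: 'w set) m" and sep: "separable_smf I UNIV m"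
    using assms(6) unfolding minimal_smf_def by auto
  let ?L = "m ` XR I"
  have addL: "(\<lambda>w. g w + h w) \<in> ?L" if gh: "g \<in> ?L" "h \<in> ?L" for g h
  proof -
    obtain x y where xy: "x \<in> XR I" "y \<in> XR I" "g = m x" "h = m y" using gh by blast
    have "(\<lambda>w. g w + h w) = m (\<lambda>n. x n + y n)" using m_add[OF S xy(1,2)] xy(3,4) by auto
    then show ?thesis using XR_add[OF xy(1,2)] by auto
  qed
  have scaleL: "(\<lambda>w. k * g w) \<in> ?L" if gh: "g \<in> ?L" for g k
  proof -
    obtain x where x: "x \<in> XR I" "g = m x" using gh by blast
    have "(\<lambda>w. k * g w) = m (\<lambda>n. k * x n)" using m_scale[OF S x(1)] x(2) by auto
    then show ?thesis using XR_scale[OF x(1)] by auto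
  qed
  have constL: "(\<lambda>w. k) \<in> ?L" for k
  proof -
    have "(\<lambda>w. k) = m (\<lambda>n. k * real (card (I n)))" using m_const[OF S Cd] by auto
    then show ?thesis using XR_scale[OF Cd] by auto
  qed
  have maxL: "(\<lambda>w. max (g w) (h w)) \<in> ?L" if gh: "g \<in> ?L" "h \<in> ?L" for g h
  proof -
    obtain x y where xy: "x \<in> XR I" "y \<in> XR I" "g = m x" "h = m y" using gh by blast
    have "(\<lambda>w. max (g w) (h w)) = m (\<lambda>n. max (x n) (y n))"
      using lattice_max[OF S Cd cpt nored xy(1,2)] xy(3,4) by auto
    then show ?thesis using XR_max[OF xy(1,2)] by auto
  qed
  have minL: "(\<lambda>w. min (g w) (h w)) \<in> ?L" if gh: "g \<in> ?L" "h \<in> ?L" for g h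
  proof -
    have "(\<lambda>w. (g w + h w) + (-1) * max (g w) (h w)) \<in> ?L"
      using addL[OF addL[OF gh] scaleL[OF maxL[OF gh]]] .
    moreover have "(\<lambda>w. (g w + h w) + (-1) * max (g w) (h w)) = (\<lambda>w. min (g w) (h w))"
      by (auto simp: max_def min_def)
    ultimately show ?thesis by simp
  qed
  have contL: "continuous_on UNIV g" if gh: "g \<in> ?L" for g
  proof -
    obtain x where x: "x \<in> XR I" "g = m x" using gh by blast
    show ?thesis unfolding x(2) by (rule m_cont[OF S x(1)])
  qed
  have sepL: "\<exists>g\<in>?L. g s \<noteq> g t" if st: "s \<noteq> t" for s t
  proof -
    have "\<exists>x\<in>XR I. m x s \<noteq> m x t" using sep st unfolding separable_smf_def by simp
    then obtain x where "x \<in> XR I" "m x s \<noteq> m x t" by blast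
    then show ?thesis by blast
  qed
  have e2: "0 < e / 2" using e by simp
  have "\<exists>g\<in>?L. \<forall>w. \<bar>g w - f w\<bar> < e / 2"
    by (rule lattice_SW[OF cpt contL addL scaleL constL maxL minL sepL f e2])
  then obtain g where g: "g \<in> ?L" "\<And>w. \<bar>g w - f w\<bar> < e / 2" by blast
  obtain x where x: "x \<in> XR I" "g = m x" using g(1) by blast
  have le: "\<bar>m x w - f w\<bar> \<le> e / 2" for w using g(2)[of w] unfolding x(2) by simp
  have "(SUP w. \<bar>m x w - f w\<bar>) \<le> e / 2"
  proof (rule cSUP_least)
    show "(UNIV :: 'w set) \<noteq> {}" by simp
    fix w :: 'w show "\<bar>m x w - f w\<bar> \<le> e / 2" by (rule le)
  qed
  then have "(SUP w. \<bar>m x w - f w\<bar>) < e" using e by (simp add: field_simps)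
  then show "\<exists>x\<in>XR I. (SUP w. \<bar>m x w - f w\<bar>) < e" using x(1) by blast
qed


end
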